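(* Fix $\gamma\in(0,1)$ and set $\alpha^{\oplus}=\sqrt{\frac{1+\sqrt{1-\gamma}}{2\pi^2}}$, $\alpha^{\ominus}=\sqrt{\frac{1-\sqrt{1-\gamma}}{2\pi^2}}$. For $\varepsilon>0$ let $\Lambda=\{k\in\mathbb{N}:\lceil\alpha^{\ominus}/\varepsilon\rceil\le k\le\lfloor\alpha^{\oplus}/\varepsilon\rfloor\}$, let $(c_k)_{k\in\Lambda}$ be independent standard normal random variables, and define $f(x)=\sum_{k\in\Lambda}c_k\sqrt{2}\cos(k\pi x)$ for $x\in[0,1]$. Then for any choice of $p>1$ and $\delta>0$ there exists a constant $C>0$ such that for all $0<\varepsilon\le1$, $$\Big(\mathbb{E}\|f\|_{L^\infty(0,1)}^p\Big)^{1/p}\le C\varepsilon^{-\delta/2}\Big(\mathbb{E}\|f\|_{L^2(0,1)}^2\Big)^{1/2}=C\varepsilon^{-(1+\delta)/2}.$$ *)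

theory Defs
  imports "HOL-Probability.Probability"
begin

definition alpha_plus :: "real \<Rightarrow> real" where
  "alpha_plus \<gamma> = sqrt ((1 + sqrt (1 - \<gamma>)) / (2 * pi\<^sup>2))"

definition alpha_minus :: "real \<Rightarrow> real" where
  "alpha_minus \<gamma> = sqrt ((1 - sqrt (1 - \<gamma>)) / (2 * pi\<^sup>2))"

definition Lam :: "real \<Rightarrow> real \<Rightarrow> nat set" where
  "Lam \<gamma> \<epsilon> = {k. \<lceil>alpha_minus \<gamma> / \<epsilon>\<rceil> \<le> int k \<and> int k \<le> \<lfloor>alpha_plus \<gamma> / \<epsilon>\<rfloor>}"

definition rand_f :: "real \<Rightarrow> real \<Rightarrow> (nat \<Rightarrow> 'a \<Rightarrow> real) \<Rightarrow> 'a \<Rightarrow> real \<Rightarrow> real" where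
  "rand_f \<gamma> \<epsilon> c \<omega> x = (\<Sum>k\<in>Lam \<gamma> \<epsilon>. c k \<omega> * sqrt 2 * cos (real k * pi * x))"

text \<open>Sup norm on (0,1) (equals the L-infinity norm for continuous functions).\<close>
definition Linf01 :: "(real \<Rightarrow> real) \<Rightarrow> real" where
  "Linf01 g = (SUP x\<in>{0<..<1}. \<bar>g x\<bar>)"

definition L2_01 :: "(real \<Rightarrow> real) \<Rightarrow> real" where
  "L2_01 g = sqrt (LBINT x=0..1. (g x)\<^sup>2)"

end

theory Submission
  imports Defs
begin


lemma cos_int_integral:
  fixes n :: int assumes "n \<noteq> 0"
  shows "((\<lambda>x. cos (real_of_int n * pi * x)) has_integral 0) {0..1::real}"
proof -
  have d: "\<And>x. ((\<lambda>x. sin (real_of_int n * pi * x) / (real_of_int n * pi)) has_vector_derivative cos (real_of_int n * pi * x)) (at x within {0..1})"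
    using assms
    by (auto intro!: derivative_eq_intros simp: has_real_derivative_iff_has_vector_derivative[symmetric])
  have "((\<lambda>x. cos (real_of_int n * pi * x)) has_integral
      (sin (real_of_int n * pi * 1) / (real_of_int n * pi) - sin (real_of_int n * pi * 0) / (real_of_int n * pi))) {0..1}"
    by (rule fundamental_theorem_of_calculus) (use d in auto)
  moreover have "sin (real_of_int n * pi) = 0" by (simp add: sin_int_times_real mult.commute)
  ultimately show ?thesis by simp
qed

lemma cos_prod_integral:
  fixes k j :: nat assumes "k \<ge> 1" "j \<ge> 1"
  shows "((\<lambda>x. 2 * cos (real k * pi * x) * cos (real j * pi * x)) has_integral (if k = j then 1 else 0)) {0..1::real}"
proof -
  have eq: "\<And>x. 2 * cos (real k * pi * x) * cos (real j * pi * x)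
      = cos (real_of_int (int k - int j) * pi * x) + cos (real_of_int (int k + int j) * pi * x)"
    by (simp add: cos_add cos_diff algebra_simps)
  have h2: "((\<lambda>x. cos (real_of_int (int k + int j) * pi * x)) has_integral 0) {0..1::real}"
    using assms by (intro cos_int_integral) auto
  show ?thesis
  proof (cases "k = j")
    case True
    have c1: "((\<lambda>x::real. 1::real) has_integral 1) {0..1::real}"
      using has_integral_const_real[of "1::real" 0 1] by simp
    have e2: "\<And>x. 2 * cos (real k * pi * x) * cos (real j * pi * x) = 1 + cos (real_of_int (int k + int j) * pi * x)"
      using True eq by simp
    have "((\<lambda>x. 2 * cos (real k * pi * x) * cos (real j * pi * x)) has_integral 1) {0..1}"
      using has_integral_add[OF c1 h2] by (simp only: e2) simp
    then show ?thesis using True by simp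
  next
    case False
    have h1: "((\<lambda>x. cos (real_of_int (int k - int j) * pi * x)) has_integral 0) {0..1::real}"
      using False by (intro cos_int_integral) auto
    from has_integral_add[OF h1 h2] show ?thesis using False by (simp add: eq)
  qed
qed

lemma sq_sum_integral:
  fixes L :: "nat set" and b :: "nat \<Rightarrow> real"
  assumes "finite L" "\<And>k. k \<in> L \<Longrightarrow> k \<ge> 1"
  shows "((\<lambda>x. (\<Sum>k\<in>L. b k * sqrt 2 * cos (real k * pi * x))\<^sup>2) has_integral (\<Sum>k\<in>L. (b k)\<^sup>2)) {0..1::real}"
proof -
  have eq: "\<And>x. (\<Sum>k\<in>L. b k * sqrt 2 * cos (real k * pi * x))\<^sup>2
     = (\<Sum>k\<in>L. \<Sum>j\<in>L. b k * b j * (2 * cos (real k * pi * x) * cos (real j * pi * x)))"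
  proof -
    have s2: "\<And>y. sqrt 2 * (sqrt 2 * y) = 2 * y" by (simp add: mult.assoc[symmetric])
    show "\<And>x. ?thesis x" by (simp add: power2_eq_square sum_product algebra_simps s2)
  qed
  have "((\<lambda>x. \<Sum>k\<in>L. \<Sum>j\<in>L. b k * b j * (2 * cos (real k * pi * x) * cos (real j * pi * x)))
     has_integral (\<Sum>k\<in>L. \<Sum>j\<in>L. b k * b j * (if k = j then 1 else 0))) {0..1}"
    using assms by (intro has_integral_sum has_integral_mult_right cos_prod_integral) auto
  moreover have "(\<Sum>k\<in>L. \<Sum>j\<in>L. b k * b j * (if k = j then 1 else 0)) = (\<Sum>k\<in>L. (b k)\<^sup>2)"
    using assms(1) by (simp add: power2_eq_square if_distrib sum.delta cong: if_cong)
  ultimately show ?thesis by (simp add: eq)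
qed

lemma L2_sq:
  fixes L :: "nat set" and b :: "nat \<Rightarrow> real"
  assumes "finite L" "\<And>k. k \<in> L \<Longrightarrow> k \<ge> 1"
  shows "(L2_01 (\<lambda>x. \<Sum>k\<in>L. b k * sqrt 2 * cos (real k * pi * x)))\<^sup>2 = (\<Sum>k\<in>L. (b k)\<^sup>2)"
proof -
  let ?g = "\<lambda>x. (\<Sum>k\<in>L. b k * sqrt 2 * cos (real k * pi * x))\<^sup>2"
  have c: "continuous_on {0..1} ?g" by (intro continuous_intros)
  have "(LBINT x=0..1. ?g x) = integral {0..1} ?g"
    using interval_integral_eq_integral[of 0 1 ?g] borel_integrable_atLeastAtMost'[OF c] by (simp add: zero_ereal_def one_ereal_def)
  also have "\<dots> = (\<Sum>k\<in>L. (b k)\<^sup>2)" using sq_sum_integral[OF assms] by (rule integral_unique)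
  finally show ?thesis unfolding L2_01_def by (simp add: sum_nonneg)
qed

lemma (in prob_space) gauss_moment:
  fixes c :: "nat \<Rightarrow> 'a \<Rightarrow> real" and a :: "nat \<Rightarrow> real"
  assumes fin: "finite I" and ind: "indep_vars (\<lambda>_. borel) c I"
    and dist: "\<And>k. k \<in> I \<Longrightarrow> distributed M lborel (c k) std_normal_density"
  shows "integrable M (\<lambda>\<omega>. (\<Sum>k\<in>I. a k * c k \<omega>)^(2*m)) \<and>
    expectation (\<lambda>\<omega>. (\<Sum>k\<in>I. a k * c k \<omega>)^(2*m)) = (\<Sum>k\<in>I. (a k)\<^sup>2)^m * (fact (2*m) / (2^m * fact m))"
proof -
  define I' where "I' = {k\<in>I. a k \<noteq> 0}"
  have finI': "finite I'" "I' \<subseteq> I" using fin by (auto simp: I'_def)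
  have se: "\<And>\<omega>. (\<Sum>k\<in>I. a k * c k \<omega>) = (\<Sum>k\<in>I'. a k * c k \<omega>)"
    using fin by (intro sum.mono_neutral_right) (auto simp: I'_def)
  have se2: "(\<Sum>k\<in>I. (a k)\<^sup>2) = (\<Sum>k\<in>I'. (a k)\<^sup>2)"
    using fin by (intro sum.mono_neutral_right) (auto simp: I'_def)
  show ?thesis
  proof (cases "I' = {}")
    case True
    then show ?thesis unfolding se se2 by (cases m) (simp_all add: prob_space)
  next
    case False
    have dk: "distributed M lborel (\<lambda>\<omega>. a k * c k \<omega>) (normal_density 0 \<bar>a k\<bar>)" if "k \<in> I'" for k
    proof -
      have "k \<in> I" "a k \<noteq> 0" using that by (auto simp: I'_def)
      from normal_density_affine[OF dist[OF \<open>k \<in> I\<close>] _ \<open>a k \<noteq> 0\<close>, of 0]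
      show ?thesis by simp
    qed
    have indI': "indep_vars (\<lambda>_. borel) (\<lambda>k \<omega>. a k * c k \<omega>) I'"
      using indep_vars_compose2[OF indep_vars_subset[OF ind finI'(2)], of "\<lambda>k x. a k * x" "\<lambda>_. borel"]
      by simp
    define \<sigma> where "\<sigma> = sqrt (\<Sum>k\<in>I'. (a k)\<^sup>2)"
    have pos: "\<And>k. k \<in> I' \<Longrightarrow> 0 < \<bar>a k\<bar>" by (auto simp: I'_def)
    have sp: "0 < (\<Sum>k\<in>I'. (a k)\<^sup>2)"
      using False finI' by (intro sum_pos) (auto simp: I'_def)
    hence \<sigma>pos: "0 < \<sigma>" by (simp add: \<sigma>_def)
    have D: "distributed M lborel (\<lambda>\<omega>. \<Sum>k\<in>I'. a k * c k \<omega>) (normal_density 0 \<sigma>)"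
      using sum_indep_normal[OF finI'(1) False indI' pos dk] by (simp add: \<sigma>_def)
    have hb: "has_bochner_integral lborel (\<lambda>x. normal_density 0 \<sigma> x * x ^ (2 * m)) (fact (2 * m) / ((2 / \<sigma>\<^sup>2)^m * fact m))"
      using normal_moment_even[OF \<sigma>pos, of 0 m] by simp
    have "integrable M (\<lambda>\<omega>. (\<Sum>k\<in>I'. a k * c k \<omega>)^(2*m))"
      using distributed_integrable[OF D, of "\<lambda>x. x^(2*m)"] hb[unfolded has_bochner_integral_iff] by simp
    moreover have "expectation (\<lambda>\<omega>. (\<Sum>k\<in>I'. a k * c k \<omega>)^(2*m)) = fact (2 * m) / ((2 / \<sigma>\<^sup>2)^m * fact m)"
      using distributed_integral[OF D, of "\<lambda>x. x^(2*m)"] has_bochner_integral_integral_eq[OF hb] by simp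
    moreover have "fact (2 * m) / ((2 / \<sigma>\<^sup>2)^m * fact m) = (\<sigma>\<^sup>2)^m * (fact (2*m) / (2^m * fact m))"
      using \<sigma>pos by (simp add: power_divide field_simps)
    moreover have "\<sigma>\<^sup>2 = (\<Sum>k\<in>I'. (a k)\<^sup>2)" using sp by (simp add: \<sigma>_def)
    ultimately show ?thesis unfolding se se2 by simp
  qed
qed

lemma cos_lip: "\<bar>cos u - cos v\<bar> \<le> \<bar>u - v\<bar>" for u v :: real
proof -
  have "\<bar>cos u - cos v\<bar> = 2 * \<bar>sin ((u + v) / 2)\<bar> * \<bar>sin ((v - u) / 2)\<bar>"
    by (simp add: cos_diff_cos abs_mult)
  also have "\<dots> \<le> 2 * 1 * \<bar>(v - u) / 2\<bar>"
    by (intro mult_mono abs_sin_x_le_abs_x) auto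
  finally show ?thesis by simp
qed

lemma sum_pow_crude:
  fixes b :: "nat \<Rightarrow> real" assumes "finite L" "0 < q"
  shows "(\<Sum>k\<in>L. \<bar>b k\<bar>)^q \<le> real (card L)^q * (\<Sum>k\<in>L. \<bar>b k\<bar>^q)"
proof (cases "L = {}")
  case True then show ?thesis using assms by (simp add: power_0_left)
next
  case False
  define B where "B = Max ((\<lambda>k. \<bar>b k\<bar>) ` L)"
  obtain k0 where k0: "k0 \<in> L" "B = \<bar>b k0\<bar>"
  proof -
    have "B \<in> (\<lambda>k. \<bar>b k\<bar>) ` L" unfolding B_def using assms False by (intro Max_in) auto
    thus ?thesis using that by auto
  qed
  have "(\<Sum>k\<in>L. \<bar>b k\<bar>) \<le> (\<Sum>k\<in>L. B)"
    using assms by (intro sum_mono) (auto simp: B_def)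
  hence "(\<Sum>k\<in>L. \<bar>b k\<bar>)^q \<le> (real (card L) * B)^q"
    by (intro power_mono) (auto intro: sum_nonneg)
  also have "\<dots> = real (card L)^q * \<bar>b k0\<bar>^q" by (simp add: k0 power_mult_distrib)
  also have "\<dots> \<le> real (card L)^q * (\<Sum>k\<in>L. \<bar>b k\<bar>^q)"
    using assms k0 by (intro mult_left_mono member_le_sum) auto
  finally show ?thesis .
qed

lemma pow_sum_le2:
  fixes A D :: real assumes "0 \<le> A" "0 \<le> D"
  shows "(A + D)^n \<le> 2^n * (A^n + D^n)"
proof -
  have "(A + D)^n \<le> (2 * max A D)^n" using assms by (intro power_mono) auto
  also have "\<dots> = 2^n * (max A D)^n" by (simp add: power_mult_distrib)
  also have "(max A D)^n \<le> A^n + D^n" using assms by (auto simp: max_def)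
  finally show ?thesis by simp
qed

lemma sup_bound:
  fixes L :: "nat set" and b :: "nat \<Rightarrow> real" and K :: real and M m :: nat
  assumes fin: "finite L" and kK: "\<And>k. k \<in> L \<Longrightarrow> real k \<le> K" and M: "M \<ge> 1" and m: "m \<ge> 1"
  defines "F \<equiv> (\<lambda>x. \<Sum>k\<in>L. b k * sqrt 2 * cos (real k * pi * x))"
  shows "0 \<le> Linf01 F \<and> Linf01 F ^ (2*m) \<le> 2^(2*m) * ((\<Sum>j\<le>M. (F (real j / real M))^(2*m))
        + (sqrt 2 * pi * K / real M * (\<Sum>k\<in>L. \<bar>b k\<bar>))^(2*m))"
proof -
  define D where "D = sqrt 2 * pi * K / real M * (\<Sum>k\<in>L. \<bar>b k\<bar>)"
  define H where "H = 2^(2*m) * ((\<Sum>j\<le>M. (F (real j / real M))^(2*m)) + D^(2*m))"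
  have Mpos: "real M > 0" using M by simp
  have pw: "\<bar>F x\<bar>^(2*m) \<le> H" if x: "x \<in> {0<..<1}" for x
  proof -
    define j where "j = nat \<lfloor>x * real M\<rfloor>"
    have xm: "0 \<le> x * real M" "x * real M \<le> real M" using x Mpos by auto
    have jM: "j \<le> M" using xm unfolding j_def by (simp add: nat_le_iff floor_le_iff)
    have j1: "real j \<le> x * real M" "x * real M < real j + 1" using xm unfolding j_def
      by (auto simp: of_nat_nat)
    define y where "y = real j / real M"
    have dxy: "\<bar>x - y\<bar> \<le> 1 / real M"
    proof -
      have e: "x - y = (x * real M - real j) / real M" using Mpos by (simp add: y_def field_simps)
      have "0 \<le> (x * real M - real j) / real M" using j1 Mpos by simp
      moreover have "(x * real M - real j) / real M \<le> 1 / real M"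
        using j1 Mpos by (intro divide_right_mono) auto
      ultimately show ?thesis unfolding e by simp
    qed
    have "\<bar>F x - F y\<bar> = \<bar>\<Sum>k\<in>L. b k * sqrt 2 * (cos (real k * pi * x) - cos (real k * pi * y))\<bar>"
      unfolding F_def by (simp add: sum_subtractf[symmetric] algebra_simps)
    also have "\<dots> \<le> (\<Sum>k\<in>L. \<bar>b k * sqrt 2 * (cos (real k * pi * x) - cos (real k * pi * y))\<bar>)"
      by (rule sum_abs)
    also have "\<dots> \<le> (\<Sum>k\<in>L. \<bar>b k\<bar> * (sqrt 2 * pi * K / real M))"
    proof (intro sum_mono)
      fix k assume k: "k \<in> L"
      have "\<bar>cos (real k * pi * x) - cos (real k * pi * y)\<bar> \<le> \<bar>real k * pi * x - real k * pi * y\<bar>"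
        by (rule cos_lip)
      also have "\<dots> = real k * pi * \<bar>x - y\<bar>" by (simp add: abs_mult right_diff_distrib[symmetric])
      also have "\<dots> \<le> K * pi * (1 / real M)"
        using kK[OF k] dxy by (intro mult_mono) auto
      finally have c: "\<bar>cos (real k * pi * x) - cos (real k * pi * y)\<bar> \<le> K * pi / real M" by simp
      have "\<bar>b k * sqrt 2 * (cos (real k * pi * x) - cos (real k * pi * y))\<bar>
          = \<bar>b k\<bar> * (sqrt 2 * \<bar>cos (real k * pi * x) - cos (real k * pi * y)\<bar>)" by (simp add: abs_mult)
      also have "\<dots> \<le> \<bar>b k\<bar> * (sqrt 2 * (K * pi / real M))"
        using c by (intro mult_left_mono) auto
      finally show "\<bar>b k * sqrt 2 * (cos (real k * pi * x) - cos (real k * pi * y))\<bar>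
          \<le> \<bar>b k\<bar> * (sqrt 2 * pi * K / real M)" by (simp add: algebra_simps)
    qed
    also have "\<dots> = D" by (simp add: D_def sum_distrib_right mult.commute sum_divide_distrib)
    finally have fd: "\<bar>F x - F y\<bar> \<le> D" .
    have fxy: "\<bar>F x\<bar> \<le> \<bar>F y\<bar> + D" using fd by linarith
    have D0: "0 \<le> D" using fd by linarith
    have "\<bar>F x\<bar>^(2*m) \<le> (\<bar>F y\<bar> + D)^(2*m)" using fxy by (intro power_mono) auto
    also have "\<dots> \<le> 2^(2*m) * (\<bar>F y\<bar>^(2*m) + D^(2*m))" using D0 by (intro pow_sum_le2) auto
    also have "\<bar>F y\<bar>^(2*m) \<le> (\<Sum>j\<le>M. (F (real j / real M))^(2*m))"
      using jM unfolding y_def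
      by (subst power_even_abs) (auto intro!: member_le_sum[of j] simp: zero_le_even_power)
    finally show ?thesis by (simp add: H_def)
  qed
  have rp: "\<bar>F x\<bar> \<le> root (2*m) H" if "x \<in> {0<..<1}" for x
  proof -
    have "\<bar>F x\<bar> = root (2*m) (\<bar>F x\<bar>^(2*m))" using m by (simp add: real_root_power_cancel)
    also have "\<dots> \<le> root (2*m) H" using pw[OF that] m by (intro real_root_le_mono) auto
    finally show ?thesis .
  qed
  have ne: "{0<..<1::real} \<noteq> {}" by auto
  have bdd: "bdd_above ((\<lambda>x. \<bar>F x\<bar>) ` {0<..<1})" using rp by (intro bdd_aboveI2[where M="root (2*m) H"]) auto
  have le: "Linf01 F \<le> root (2*m) H" unfolding Linf01_def using rp ne by (intro cSUP_least) auto
  have ge: "0 \<le> Linf01 F"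
  proof -
    have "\<bar>F (1/2)\<bar> \<le> Linf01 F" unfolding Linf01_def by (rule cSUP_upper[OF _ bdd]) auto
    thus ?thesis by linarith
  qed
  have H0: "0 \<le> H"
  proof -
    have "0 \<le> \<bar>F (1/2)\<bar>^(2*m)" by simp
    also have "\<dots> \<le> H" by (rule pw) auto
    finally show ?thesis .
  qed
  have "Linf01 F ^ (2*m) \<le> (root (2*m) H)^(2*m)" using ge le by (intro power_mono) auto
  also have "\<dots> = H" using m H0 by simp
  finally show ?thesis using ge by (simp add: H_def D_def)
qed

lemma (in prob_space) single_moment:
  assumes dist: "distributed M lborel X std_normal_density"
  shows "integrable M (\<lambda>\<omega>. (X \<omega>)^(2*m)) \<and> expectation (\<lambda>\<omega>. (X \<omega>)^(2*m)) = fact (2*m) / (2^m * fact m)"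
  using distributed_integrable[OF dist, of "\<lambda>x. x^(2*m)"] distributed_integral[OF dist, of "\<lambda>x. x^(2*m)"]
    integrable_std_normal_moment[of "2*m"] integral_std_normal_moment_even[of m]
  by simp

lemma (in prob_space) G_bound:
  fixes c :: "nat \<Rightarrow> 'a \<Rightarrow> real" and a :: "nat \<Rightarrow> nat \<Rightarrow> real"
  assumes fin: "finite L" and ind: "indep_vars (\<lambda>_. borel) c L"
    and dist: "\<And>k. k \<in> L \<Longrightarrow> distributed M lborel (c k) std_normal_density"
    and finJ: "finite J" and a: "\<And>j k. \<bar>a j k\<bar> \<le> sqrt 2"
  shows "integrable M (\<lambda>\<omega>. 2^(2*m) * ((\<Sum>j\<in>J. (\<Sum>k\<in>L. a j k * c k \<omega>)^(2*m)) + 5^(2*m) * (\<Sum>k\<in>L. (c k \<omega>)^(2*m)))) \<and>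
     expectation (\<lambda>\<omega>. 2^(2*m) * ((\<Sum>j\<in>J. (\<Sum>k\<in>L. a j k * c k \<omega>)^(2*m)) + 5^(2*m) * (\<Sum>k\<in>L. (c k \<omega>)^(2*m))))
     \<le> 2^(2*m) * (fact (2*m) / (2^m * fact m)) * (real (card J) * (2 * real (card L))^m + 5^(2*m) * real (card L))"
proof -
  define \<mu> where "\<mu> = fact (2*m) / (2^m * fact m :: real)"
  have \<mu>0: "0 \<le> \<mu>" by (simp add: \<mu>_def)
  have gj: "integrable M (\<lambda>\<omega>. (\<Sum>k\<in>L. a j k * c k \<omega>)^(2*m)) \<and>
     expectation (\<lambda>\<omega>. (\<Sum>k\<in>L. a j k * c k \<omega>)^(2*m)) = (\<Sum>k\<in>L. (a j k)\<^sup>2)^m * \<mu>" for j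
    unfolding \<mu>_def by (rule gauss_moment[OF fin ind dist])
  have sk: "integrable M (\<lambda>\<omega>. (c k \<omega>)^(2*m)) \<and> expectation (\<lambda>\<omega>. (c k \<omega>)^(2*m)) = \<mu>" if "k \<in> L" for k
    unfolding \<mu>_def by (rule single_moment[OF dist[OF that]])
  have i1: "integrable M (\<lambda>\<omega>. \<Sum>j\<in>J. (\<Sum>k\<in>L. a j k * c k \<omega>)^(2*m))"
    using gj by (intro Bochner_Integration.integrable_sum) auto
  have i2: "integrable M (\<lambda>\<omega>. \<Sum>k\<in>L. (c k \<omega>)^(2*m))"
    using sk by (intro Bochner_Integration.integrable_sum) auto
  have e1: "expectation (\<lambda>\<omega>. \<Sum>j\<in>J. (\<Sum>k\<in>L. a j k * c k \<omega>)^(2*m)) = (\<Sum>j\<in>J. (\<Sum>k\<in>L. (a j k)\<^sup>2)^m * \<mu>)"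
    using gj by (subst Bochner_Integration.integral_sum) auto
  have e2: "expectation (\<lambda>\<omega>. \<Sum>k\<in>L. (c k \<omega>)^(2*m)) = real (card L) * \<mu>"
    using sk by (subst Bochner_Integration.integral_sum) auto
  have b1: "(\<Sum>j\<in>J. (\<Sum>k\<in>L. (a j k)\<^sup>2)^m * \<mu>) \<le> (\<Sum>j\<in>J. (2 * real (card L))^m * \<mu>)"
  proof (intro sum_mono mult_right_mono \<mu>0 power_mono)
    fix j
    have "(\<Sum>k\<in>L. (a j k)\<^sup>2) \<le> (\<Sum>k\<in>L. 2)"
    proof (intro sum_mono)
      fix k
      have "(a j k)\<^sup>2 = \<bar>a j k\<bar>\<^sup>2" by simp
      also have "\<dots> \<le> (sqrt 2)\<^sup>2" using a[of j k] by (intro power_mono) auto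
      finally show "(a j k)\<^sup>2 \<le> 2" by simp
    qed
    thus "(\<Sum>k\<in>L. (a j k)\<^sup>2) \<le> 2 * real (card L)" by simp
    show "0 \<le> (\<Sum>k\<in>L. (a j k)\<^sup>2)" by (intro sum_nonneg) auto
  qed
  have ee: "expectation (\<lambda>\<omega>. 2^(2*m) * ((\<Sum>j\<in>J. (\<Sum>k\<in>L. a j k * c k \<omega>)^(2*m)) + 5^(2*m) * (\<Sum>k\<in>L. (c k \<omega>)^(2*m))))
     = 2^(2*m) * ((\<Sum>j\<in>J. (\<Sum>k\<in>L. (a j k)\<^sup>2)^m * \<mu>) + 5^(2*m) * (real (card L) * \<mu>))"
    using i1 i2 by (simp add: e1[symmetric] e2[symmetric])
  have "2^(2*m) * ((\<Sum>j\<in>J. (\<Sum>k\<in>L. (a j k)\<^sup>2)^m * \<mu>) + 5^(2*m) * (real (card L) * \<mu>))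
     \<le> 2^(2*m) * ((\<Sum>j\<in>J. (2 * real (card L))^m * \<mu>) + 5^(2*m) * (real (card L) * \<mu>))"
    using b1 by (intro mult_left_mono add_right_mono) auto
  also have "\<dots> = 2^(2*m) * \<mu> * (real (card J) * (2 * real (card L))^m + 5^(2*m) * real (card L))"
    by (simp add: algebra_simps)
  finally show ?thesis using i1 i2 unfolding ee \<mu>_def by simp
qed

lemma Lam_facts:
  assumes "0 < \<gamma>" "\<gamma> < 1" "0 < \<epsilon>"
  shows "finite (Lam \<gamma> \<epsilon>) \<and> (\<forall>k\<in>Lam \<gamma> \<epsilon>. 1 \<le> k \<and> real k \<le> 1 / \<epsilon>) \<and> real (card (Lam \<gamma> \<epsilon>)) \<le> 1 / \<epsilon>"
proof -
  have s1: "sqrt (1 - \<gamma>) < 1" using assms by simp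
  have s0: "0 \<le> sqrt (1 - \<gamma>)" using assms by simp
  have pi2: "1 \<le> pi\<^sup>2" using pi_gt3 by (intro one_le_power) simp
  have am: "0 < alpha_minus \<gamma>" unfolding alpha_minus_def using s1 by simp
  have ap: "alpha_plus \<gamma> \<le> 1"
  proof -
    have "(1 + sqrt (1 - \<gamma>)) / (2 * pi\<^sup>2) \<le> 1" using s1 pi2 by (simp add: divide_le_eq) (use s1 in linarith)
    thus ?thesis unfolding alpha_plus_def by simp
  qed
  have k1: "1 \<le> k" "real k \<le> 1 / \<epsilon>" if "k \<in> Lam \<gamma> \<epsilon>" for k
  proof -
    have a: "\<lceil>alpha_minus \<gamma> / \<epsilon>\<rceil> \<le> int k" "int k \<le> \<lfloor>alpha_plus \<gamma> / \<epsilon>\<rfloor>" using that by (auto simp: Lam_def)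
    have "0 < alpha_minus \<gamma> / \<epsilon>" using am assms by simp
    hence "0 < \<lceil>alpha_minus \<gamma> / \<epsilon>\<rceil>" by simp
    with a show "1 \<le> k" by linarith
    have "real k \<le> alpha_plus \<gamma> / \<epsilon>" using a(2) by (simp add: le_floor_iff)
    also have "\<dots> \<le> 1 / \<epsilon>" using ap assms by (simp add: divide_right_mono)
    finally show "real k \<le> 1 / \<epsilon>" .
  qed
  have sub: "Lam \<gamma> \<epsilon> \<subseteq> {1..nat \<lfloor>1 / \<epsilon>\<rfloor>}"
  proof
    fix k assume "k \<in> Lam \<gamma> \<epsilon>"
    with k1 have "1 \<le> k" "real k \<le> 1 / \<epsilon>" by auto
    hence "int k \<le> \<lfloor>1 / \<epsilon>\<rfloor>" by (simp add: le_floor_iff)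
    with \<open>1 \<le> k\<close> show "k \<in> {1..nat \<lfloor>1 / \<epsilon>\<rfloor>}" by auto
  qed
  have fin: "finite (Lam \<gamma> \<epsilon>)" using sub finite_subset by blast
  have "card (Lam \<gamma> \<epsilon>) \<le> nat \<lfloor>1 / \<epsilon>\<rfloor>" using card_mono[OF _ sub] by simp
  hence "real (card (Lam \<gamma> \<epsilon>)) \<le> real (nat \<lfloor>1 / \<epsilon>\<rfloor>)" by linarith
  also have "\<dots> \<le> 1 / \<epsilon>" using assms by (simp add: of_nat_nat)
  finally show ?thesis using fin k1 by blast
qed

lemma powr_split:
  fixes X B p :: real and n :: nat
  assumes "0 \<le> X" "0 < B" "p \<le> real n" "0 < p"
  shows "X powr p \<le> B powr p + B powr (p - real n) * X^n"
proof (cases "X \<le> B")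
  case True
  have "X powr p \<le> B powr p" using True assms by (intro powr_mono2) auto
  moreover have "0 \<le> B powr (p - real n) * X^n" using assms by simp
  ultimately show ?thesis by linarith
next
  case False
  hence X0: "0 < X" using assms by simp
  have "X powr p = X powr (p - real n) * X powr (real n)" by (simp add: powr_add[symmetric])
  also have "\<dots> = X powr (p - real n) * X^n" using X0 by (simp add: powr_realpow)
  also have "\<dots> \<le> B powr (p - real n) * X^n"
    using False assms by (intro mult_right_mono powr_mono2') auto
  finally show ?thesis using assms by (smt (verit) powr_ge_zero)
qed

lemma main_bound:
  fixes \<gamma> :: real and p \<delta> \<epsilon> :: real and m :: nat and M :: "'a measure" and c :: "nat \<Rightarrow> 'a \<Rightarrow> real"
  assumes g: "0 < \<gamma>" "\<gamma> < 1" and p: "1 < p" and d: "0 < \<delta>" and m1: "1 \<le> m"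
    and pm: "p \<le> real (2*m)" and dm: "4 / \<delta> \<le> real (2*m)"
    and e: "0 < \<epsilon>" "\<epsilon> \<le> 1"
    and P: "prob_space M" and ind: "prob_space.indep_vars M (\<lambda>_. borel) c (Lam \<gamma> \<epsilon>)"
    and dist: "\<forall>k\<in>Lam \<gamma> \<epsilon>. distributed M lborel (c k) std_normal_density"
  defines "Kc \<equiv> 2^(2*m) * (fact (2*m) / (2^m * fact m)) * (3 * 2^m + 5^(2*m))"
  shows "(prob_space.expectation M (\<lambda>\<omega>. Linf01 (rand_f \<gamma> \<epsilon> c \<omega>) powr p)) powr (1 / p)
          \<le> (2 * Kc powr (1 / real (2*m))) * \<epsilon> powr (- \<delta> / 2) * sqrt (real (card (Lam \<gamma> \<epsilon>)))"
proof -
  interpret prob_space M by (rule P)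
  define L where "L = Lam \<gamma> \<epsilon>"
  define N where "N = card L"
  define q where "q = 2*m"
  have LF: "finite L" "\<And>k. k \<in> L \<Longrightarrow> 1 \<le> k \<and> real k \<le> 1 / \<epsilon>" "real N \<le> 1 / \<epsilon>"
    using Lam_facts[OF g e(1)] unfolding L_def N_def by auto
  have rf: "rand_f \<gamma> \<epsilon> c \<omega> = (\<lambda>x. \<Sum>k\<in>L. c k \<omega> * sqrt 2 * cos (real k * pi * x))" for \<omega>
    by (simp add: rand_f_def L_def fun_eq_iff)
  show ?thesis
  proof (cases "N = 0")
    case True
    hence "L = {}" using LF(1) by (simp add: N_def)
    hence "rand_f \<gamma> \<epsilon> c \<omega> = (\<lambda>x. 0)" for \<omega> by (simp add: rf)
    hence "Linf01 (rand_f \<gamma> \<epsilon> c \<omega>) = 0" for \<omega> by (simp add: Linf01_def)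
    thus ?thesis by simp
  next
    case False
    hence N1: "1 \<le> N" by simp
    define Mg where "Mg = nat \<lceil>1 / \<epsilon>^2\<rceil>"
    have e2: "1 \<le> 1 / \<epsilon>^2" using e by (simp add: power_le_one)
    have Mg1: "1 / \<epsilon>^2 \<le> real Mg" "real Mg \<le> 1 / \<epsilon>^2 + 1" unfolding Mg_def using e2
      by (simp_all add: of_nat_nat)
    have Mgpos: "1 \<le> Mg" using Mg1 e2 by linarith
    define J where "J = {..Mg}"
    have cJ: "real (card J) \<le> 3 / \<epsilon>^2" using Mg1 e2 by (simp add: J_def)
    define a where "a = (\<lambda>j k. sqrt 2 * cos (real k * pi * (real j / real Mg)))"
    have aa: "\<bar>a j k\<bar> \<le> sqrt 2" for j k by (simp add: a_def abs_mult)
    define \<mu> where "\<mu> = fact (2*m) / (2^m * fact m :: real)"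
    have \<mu>0: "0 < \<mu>" by (simp add: \<mu>_def)
    define G where "G = (\<lambda>\<omega>. 2^q * ((\<Sum>j\<in>J. (\<Sum>k\<in>L. a j k * c k \<omega>)^q) + 5^q * (\<Sum>k\<in>L. (c k \<omega>)^q)))"
    have GB: "integrable M G" "expectation G \<le> 2^q * \<mu> * (real (card J) * (2 * real N)^m + 5^q * real N)"
      using G_bound[OF LF(1) ind[folded L_def] dist[folded L_def, rule_format] _ aa, of J m]
      unfolding G_def q_def \<mu>_def N_def J_def by auto
    have EG: "expectation G \<le> Kc * real N ^ m / \<epsilon>^2"
    proof -
      have Nm: "real N \<le> real N ^ m" using N1 m1 by (simp add: self_le_power)
      have "real (card J) * (2 * real N)^m \<le> 3 / \<epsilon>^2 * (2^m * real N ^ m)"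
        using cJ unfolding power_mult_distrib by (intro mult_right_mono) auto
      moreover have "5^q * real N \<le> 5^q * (real N ^ m / \<epsilon>^2)"
      proof -
        have "\<epsilon>^2 \<le> 1" using e by (simp add: power_le_one)
        hence "real N ^ m * \<epsilon>^2 \<le> real N ^ m" by (simp add: mult_left_le)
        hence "real N ^ m \<le> real N ^ m / \<epsilon>^2" using e by (simp add: le_divide_eq)
        with Nm have "real N \<le> real N ^ m / \<epsilon>^2" by linarith
        thus ?thesis by (intro mult_left_mono) auto
      qed
      ultimately have "real (card J) * (2 * real N)^m + 5^q * real N \<le> 3 / \<epsilon>^2 * (2^m * real N ^ m) + 5^q * (real N ^ m / \<epsilon>^2)"
        by (rule add_mono)
      also have "\<dots> = (3 * 2^m + 5^q) * real N ^ m / \<epsilon>^2" by (simp add: field_simps add_divide_distrib)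
      finally have "real (card J) * (2 * real N)^m + 5^q * real N \<le> (3 * 2^m + 5^q) * real N ^ m / \<epsilon>^2" .
      hence "2^q * \<mu> * (real (card J) * (2 * real N)^m + 5^q * real N) \<le> 2^q * \<mu> * ((3 * 2^m + 5^q) * real N ^ m / \<epsilon>^2)"
        using \<mu>0 by (intro mult_left_mono) auto
      with GB(2) show ?thesis by (simp add: Kc_def \<mu>_def q_def)
    qed
    have pwG: "0 \<le> Linf01 (rand_f \<gamma> \<epsilon> c \<omega>) \<and> Linf01 (rand_f \<gamma> \<epsilon> c \<omega>) ^ q \<le> G \<omega>" for \<omega>
    proof -
      have SB: "0 \<le> Linf01 (rand_f \<gamma> \<epsilon> c \<omega>) \<and> Linf01 (rand_f \<gamma> \<epsilon> c \<omega>) ^ q \<le> 2^q * ((\<Sum>j\<le>Mg. (rand_f \<gamma> \<epsilon> c \<omega> (real j / real Mg))^q)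
        + (sqrt 2 * pi * (1/\<epsilon>) / real Mg * (\<Sum>k\<in>L. \<bar>c k \<omega>\<bar>))^q)"
        unfolding rf q_def using sup_bound[OF LF(1) _ Mgpos m1, of "1/\<epsilon>" "\<lambda>k. c k \<omega>"] LF(2) by auto
      have t1: "(\<Sum>j\<le>Mg. (rand_f \<gamma> \<epsilon> c \<omega> (real j / real Mg))^q) = (\<Sum>j\<in>J. (\<Sum>k\<in>L. a j k * c k \<omega>)^q)"
        unfolding J_def rf a_def by (intro sum.cong refl arg_cong[where f="\<lambda>x. x^q"]) (simp add: mult.commute mult.left_commute)
      have cst: "sqrt 2 * pi * (1/\<epsilon>) / real Mg \<le> 5 * \<epsilon>"
      proof -
        have s2: "sqrt 2 * pi \<le> 5"
        proof -
          have "sqrt 2 \<le> 3/2" by (rule real_le_lsqrt) (auto simp: power2_eq_square)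
          moreover have "pi \<le> 10/3" using pi_approx by simp
          ultimately have "sqrt 2 * pi \<le> 3/2 * (10/3)" by (intro mult_mono) auto
          thus ?thesis by simp
        qed
        have "(1/\<epsilon>) / real Mg \<le> \<epsilon>"
        proof -
          have pos: "0 < \<epsilon> * real Mg" using e Mgpos by simp
          have "1 \<le> \<epsilon> * (\<epsilon> * real Mg)" using Mg1(1) e by (simp add: field_simps power2_eq_square)
          hence "1 / (\<epsilon> * real Mg) \<le> \<epsilon>" by (simp add: pos_divide_le_eq[OF pos] mult.commute)
          thus ?thesis by simp
        qed
        have "sqrt 2 * pi * ((1/\<epsilon>) / real Mg) \<le> 5 * \<epsilon>"
          by (rule mult_mono[OF s2 \<open>(1/\<epsilon>) / real Mg \<le> \<epsilon>\<close>]) (use e in auto)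
        thus ?thesis by simp
      qed
      have "(sqrt 2 * pi * (1/\<epsilon>) / real Mg * (\<Sum>k\<in>L. \<bar>c k \<omega>\<bar>))^q \<le> (5 * \<epsilon> * (\<Sum>k\<in>L. \<bar>c k \<omega>\<bar>))^q"
      proof (rule power_mono)
        show "sqrt 2 * pi * (1/\<epsilon>) / real Mg * (\<Sum>k\<in>L. \<bar>c k \<omega>\<bar>) \<le> 5 * \<epsilon> * (\<Sum>k\<in>L. \<bar>c k \<omega>\<bar>)"
          using cst by (intro mult_right_mono) (auto intro: sum_nonneg)
        show "0 \<le> sqrt 2 * pi * (1/\<epsilon>) / real Mg * (\<Sum>k\<in>L. \<bar>c k \<omega>\<bar>)"
          using e by (intro mult_nonneg_nonneg divide_nonneg_nonneg sum_nonneg) auto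
      qed
      also have "\<dots> = (5 * \<epsilon>)^q * (\<Sum>k\<in>L. \<bar>c k \<omega>\<bar>)^q" by (simp add: power_mult_distrib)
      also have "\<dots> \<le> (5 * \<epsilon>)^q * (real N ^ q * (\<Sum>k\<in>L. \<bar>c k \<omega>\<bar>^q))"
        using sum_pow_crude[OF LF(1), of q "\<lambda>k. c k \<omega>"] m1 e unfolding N_def q_def
        by (intro mult_left_mono) auto
      also have "\<dots> = 5^q * (\<epsilon> * real N)^q * (\<Sum>k\<in>L. (c k \<omega>)^q)"
        by (simp add: power_mult_distrib q_def power_even_abs)
      also have "\<dots> \<le> 5^q * 1 * (\<Sum>k\<in>L. (c k \<omega>)^q)"
      proof (intro mult_right_mono mult_left_mono)
        have "\<epsilon> * real N \<le> 1" using LF(3) e by (simp add: field_simps)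
        thus "(\<epsilon> * real N)^q \<le> 1" using e by (intro power_le_one) auto
        show "0 \<le> (\<Sum>k\<in>L. (c k \<omega>)^q)" by (intro sum_nonneg) (simp add: q_def zero_le_even_power)
      qed auto
      finally have Dle: "(sqrt 2 * pi * (1/\<epsilon>) / real Mg * (\<Sum>k\<in>L. \<bar>c k \<omega>\<bar>))^q \<le> 5^q * (\<Sum>k\<in>L. (c k \<omega>)^q)" by simp
      have "Linf01 (rand_f \<gamma> \<epsilon> c \<omega>) ^ q \<le> 2^q * ((\<Sum>j\<in>J. (\<Sum>k\<in>L. a j k * c k \<omega>)^q)
        + (sqrt 2 * pi * (1/\<epsilon>) / real Mg * (\<Sum>k\<in>L. \<bar>c k \<omega>\<bar>))^q)" using SB unfolding t1 by simp
      also have "\<dots> \<le> G \<omega>" unfolding G_def using Dle by (intro mult_left_mono add_left_mono) auto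
      finally show ?thesis using SB by simp
    qed
    define B where "B = (Kc * real N ^ m / \<epsilon>^2) powr (1 / real q)"
    have Kc0: "0 < Kc" unfolding Kc_def by (intro mult_pos_pos divide_pos_pos add_pos_pos) auto
    have B0: "0 < B" unfolding B_def using Kc0 N1 e by simp
    have Bq: "B ^ q = Kc * real N ^ m / \<epsilon>^2"
    proof -
      have "B ^ q = B powr real q" using B0 by (simp add: powr_realpow)
      also have "\<dots> = Kc * real N ^ m / \<epsilon>^2" unfolding B_def using Kc0 N1 e m1
        by (simp add: powr_powr q_def)
      finally show ?thesis .
    qed
    have pq: "p \<le> real q" "0 < p" using pm p by (auto simp: q_def)
    have pt: "Linf01 (rand_f \<gamma> \<epsilon> c \<omega>) powr p \<le> B powr p + B powr (p - real q) * G \<omega>" for \<omega>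
    proof -
      have "Linf01 (rand_f \<gamma> \<epsilon> c \<omega>) powr p \<le> B powr p + B powr (p - real q) * Linf01 (rand_f \<gamma> \<epsilon> c \<omega>)^q"
        using powr_split[OF _ B0 pq] pwG by auto
      also have "\<dots> \<le> B powr p + B powr (p - real q) * G \<omega>"
        using pwG by (intro add_left_mono mult_left_mono) auto
      finally show ?thesis .
    qed
    define E where "E = expectation (\<lambda>\<omega>. Linf01 (rand_f \<gamma> \<epsilon> c \<omega>) powr p)"
    have E0: "0 \<le> E" unfolding E_def by (intro integral_nonneg_AE) auto
    have E2: "E \<le> 2 * B powr p"
    proof (cases "integrable M (\<lambda>\<omega>. Linf01 (rand_f \<gamma> \<epsilon> c \<omega>) powr p)")
      case True
      have "E \<le> expectation (\<lambda>\<omega>. B powr p + B powr (p - real q) * G \<omega>)"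
        unfolding E_def using True GB(1) pt by (intro integral_mono) auto
      also have "\<dots> = B powr p + B powr (p - real q) * expectation G"
        using GB(1) by (simp add: prob_space)
      also have "\<dots> \<le> B powr p + B powr (p - real q) * B^q"
        using EG Bq by (intro add_left_mono mult_left_mono) auto
      also have "B powr (p - real q) * B^q = B powr p"
        using B0 by (simp add: powr_diff powr_realpow[symmetric])
      finally show ?thesis by simp
    next
      case False
      hence "E = 0" unfolding E_def by (simp add: not_integrable_integral_eq)
      thus ?thesis using B0 by simp
    qed
    have "E powr (1/p) \<le> (2 * B powr p) powr (1/p)" using E0 E2 pq by (intro powr_mono2) auto
    also have "\<dots> = 2 powr (1/p) * B" using B0 pq by (simp add: powr_mult powr_powr)
    also have "\<dots> \<le> 2 * B"
    proof -
      have "2 powr (1/p) \<le> 2 powr 1" using p by (intro powr_mono) auto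
      thus ?thesis using B0 by simp
    qed
    also have "B = Kc powr (1 / real q) * \<epsilon> powr (- 2 / real q) * sqrt (real N)"
    proof -
      have "B = Kc powr (1 / real q) * (real N ^ m) powr (1 / real q) / (\<epsilon>^2) powr (1 / real q)"
        unfolding B_def by (simp only: powr_mult powr_divide)
      also have "(real N ^ m) powr (1 / real q) = sqrt (real N)"
        using N1 m1 by (simp add: powr_realpow[symmetric] powr_powr q_def powr_half_sqrt[symmetric])
      also have "(\<epsilon>^2) powr (1 / real q) = \<epsilon> powr (2 / real q)"
      proof -
        have "(\<epsilon>^2) = \<epsilon> powr (real 2)" using e by (simp only: powr_realpow)
        thus ?thesis by (simp add: powr_powr)
      qed
      also have "Kc powr (1 / real q) * sqrt (real N) / \<epsilon> powr (2 / real q)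
          = Kc powr (1 / real q) * \<epsilon> powr (- 2 / real q) * sqrt (real N)"
        by (simp add: powr_minus divide_inverse)
      finally show ?thesis by simp
    qed
    also have "2 * (Kc powr (1 / real q) * \<epsilon> powr (- 2 / real q) * sqrt (real N))
        \<le> 2 * (Kc powr (1 / real q) * \<epsilon> powr (- \<delta> / 2) * sqrt (real N))"
    proof -
      have "- \<delta> / 2 \<le> - 2 / real q" using dm d m1 by (simp add: q_def field_simps)
      hence "\<epsilon> powr (- 2 / real q) \<le> \<epsilon> powr (- \<delta> / 2)" using e by (intro powr_mono') auto
      thus ?thesis by (intro mult_left_mono mult_right_mono) auto
    qed
    finally show ?thesis unfolding E_def L_def N_def q_def by (simp add: mult_ac L_def[symmetric])
  qed
qed

theorem corollary2p5:
  fixes \<gamma> :: real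
  assumes "0 < \<gamma>" "\<gamma> < 1"
  shows "\<forall>p>1. \<forall>\<delta>>0. \<exists>C>0. \<forall>\<epsilon>. 0 < \<epsilon> \<and> \<epsilon> \<le> 1 \<longrightarrow>
     (\<forall>(M :: 'a measure) (c :: nat \<Rightarrow> 'a \<Rightarrow> real).
        prob_space M \<and>
        prob_space.indep_vars M (\<lambda>_. borel) c (Lam \<gamma> \<epsilon>) \<and>
        (\<forall>k\<in>Lam \<gamma> \<epsilon>. distributed M lborel (c k) std_normal_density) \<longrightarrow>
        (prob_space.expectation M (\<lambda>\<omega>. Linf01 (rand_f \<gamma> \<epsilon> c \<omega>) powr p)) powr (1 / p)
          \<le> C * \<epsilon> powr (- \<delta> / 2)
             * sqrt (prob_space.expectation M (\<lambda>\<omega>. (L2_01 (rand_f \<gamma> \<epsilon> c \<omega>))\<^sup>2))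
        \<and> (prob_space.expectation M (\<lambda>\<omega>. Linf01 (rand_f \<gamma> \<epsilon> c \<omega>) powr p)) powr (1 / p)
          \<le> C * \<epsilon> powr (- (1 + \<delta>) / 2))"
proof (intro allI impI)
  fix p \<delta> :: real assume p: "1 < p" and d: "0 < \<delta>"
  define m where "m = nat \<lceil>p + 4 / \<delta>\<rceil> + 1"
  have m1: "1 \<le> m" by (simp add: m_def)
  have mm: "p + 4 / \<delta> \<le> real m" unfolding m_def by linarith
  have d4: "0 < 4 / \<delta>" using d by simp
  have r2: "real (2*m) = 2 * real m" by simp
  have pm: "p \<le> real (2*m)" using mm d4 p unfolding r2 by linarith
  have dm: "4 / \<delta> \<le> real (2*m)" using mm d4 p unfolding r2 by linarith
  define Kc where "Kc = (2::real)^(2*m) * (fact (2*m) / (2^m * fact m)) * (3 * 2^m + 5^(2*m))"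
  define C where "C = 2 * Kc powr (1 / real (2*m))"
  have Kc0: "0 < Kc" unfolding Kc_def by (intro mult_pos_pos divide_pos_pos add_pos_pos) auto
  have C0: "0 < C" using Kc0 by (simp add: C_def)
  show "\<exists>C>0. \<forall>\<epsilon>. 0 < \<epsilon> \<and> \<epsilon> \<le> 1 \<longrightarrow>
     (\<forall>(M :: 'a measure) (c :: nat \<Rightarrow> 'a \<Rightarrow> real).
        prob_space M \<and>
        prob_space.indep_vars M (\<lambda>_. borel) c (Lam \<gamma> \<epsilon>) \<and>
        (\<forall>k\<in>Lam \<gamma> \<epsilon>. distributed M lborel (c k) std_normal_density) \<longrightarrow>
        (prob_space.expectation M (\<lambda>\<omega>. Linf01 (rand_f \<gamma> \<epsilon> c \<omega>) powr p)) powr (1 / p)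
          \<le> C * \<epsilon> powr (- \<delta> / 2)
             * sqrt (prob_space.expectation M (\<lambda>\<omega>. (L2_01 (rand_f \<gamma> \<epsilon> c \<omega>))\<^sup>2))
        \<and> (prob_space.expectation M (\<lambda>\<omega>. Linf01 (rand_f \<gamma> \<epsilon> c \<omega>) powr p)) powr (1 / p)
          \<le> C * \<epsilon> powr (- (1 + \<delta>) / 2))"
  proof (intro exI[of _ C] conjI C0 allI impI)
    fix \<epsilon> :: real and M :: "'a measure" and c :: "nat \<Rightarrow> 'a \<Rightarrow> real"
    assume e: "0 < \<epsilon> \<and> \<epsilon> \<le> 1"
    assume H: "prob_space M \<and> prob_space.indep_vars M (\<lambda>_. borel) c (Lam \<gamma> \<epsilon>) \<and>
        (\<forall>k\<in>Lam \<gamma> \<epsilon>. distributed M lborel (c k) std_normal_density)"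
    interpret prob_space M using H by simp
    define L where "L = Lam \<gamma> \<epsilon>"
    define N where "N = card L"
    have LF: "finite L" "\<And>k. k \<in> L \<Longrightarrow> 1 \<le> k \<and> real k \<le> 1 / \<epsilon>" "real N \<le> 1 / \<epsilon>"
      using Lam_facts[OF assms] e unfolding L_def N_def by auto
    have MB: "expectation (\<lambda>\<omega>. Linf01 (rand_f \<gamma> \<epsilon> c \<omega>) powr p) powr (1 / p)
          \<le> C * \<epsilon> powr (- \<delta> / 2) * sqrt (real N)"
    proof -
      have e1: "0 < \<epsilon>" and e2: "\<epsilon> \<le> 1" using e by auto
      have P: "prob_space M" and ind: "indep_vars (\<lambda>_. borel) c (Lam \<gamma> \<epsilon>)"
        and dist: "\<forall>k\<in>Lam \<gamma> \<epsilon>. distributed M lborel (c k) std_normal_density" using H by auto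
      show ?thesis using main_bound[OF assms p d m1 pm dm e1 e2 P ind dist]
        unfolding C_def Kc_def N_def L_def .
    qed
    have EL: "expectation (\<lambda>\<omega>. (L2_01 (rand_f \<gamma> \<epsilon> c \<omega>))\<^sup>2) = real N"
    proof -
      have sm: "integrable M (\<lambda>\<omega>. (c k \<omega>)\<^sup>2) \<and> expectation (\<lambda>\<omega>. (c k \<omega>)\<^sup>2) = 1" if "k \<in> L" for k
      proof -
        have "distributed M lborel (c k) std_normal_density" using H that by (auto simp: L_def)
        from single_moment[OF this, of 1] show ?thesis by (simp add: numeral_2_eq_2)
      qed
      have "(L2_01 (rand_f \<gamma> \<epsilon> c \<omega>))\<^sup>2 = (\<Sum>k\<in>L. (c k \<omega>)\<^sup>2)" for \<omega>
      proof -
        have "rand_f \<gamma> \<epsilon> c \<omega> = (\<lambda>x. \<Sum>k\<in>L. c k \<omega> * sqrt 2 * cos (real k * pi * x))"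
          by (simp add: rand_f_def L_def fun_eq_iff)
        moreover have k1: "\<And>k. k \<in> L \<Longrightarrow> 1 \<le> k" using LF(2) by blast
        ultimately show ?thesis using L2_sq[OF LF(1) k1, of "\<lambda>k. c k \<omega>"] by simp
      qed
      hence "expectation (\<lambda>\<omega>. (L2_01 (rand_f \<gamma> \<epsilon> c \<omega>))\<^sup>2) = expectation (\<lambda>\<omega>. \<Sum>k\<in>L. (c k \<omega>)\<^sup>2)" by simp
      also have "\<dots> = (\<Sum>k\<in>L. expectation (\<lambda>\<omega>. (c k \<omega>)\<^sup>2))"
        using sm by (intro Bochner_Integration.integral_sum) blast
      also have "\<dots> = (\<Sum>k\<in>L. 1)"
        using sm by (intro sum.cong) auto
      finally show ?thesis by (simp add: N_def)
    qed
    show "expectation (\<lambda>\<omega>. Linf01 (rand_f \<gamma> \<epsilon> c \<omega>) powr p) powr (1 / p)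
          \<le> C * \<epsilon> powr (- \<delta> / 2) * sqrt (expectation (\<lambda>\<omega>. (L2_01 (rand_f \<gamma> \<epsilon> c \<omega>))\<^sup>2))"
      using MB EL by simp
    have sN: "sqrt (real N) \<le> \<epsilon> powr (- 1 / 2)"
    proof -
      have "sqrt (real N) \<le> sqrt (1 / \<epsilon>)" using LF(3) by simp
      also have "sqrt (1 / \<epsilon>) = \<epsilon> powr (- 1 / 2)"
      proof -
        have h: "\<epsilon> powr (1/2) = sqrt \<epsilon>" using e by (intro powr_half_sqrt) auto
        have m: "\<epsilon> powr (- 1 / 2) = inverse (\<epsilon> powr (1/2))"
          by (subst powr_minus[symmetric]) simp
        show ?thesis unfolding m h by (simp add: real_sqrt_inverse divide_inverse)
      qed
      finally show ?thesis .
    qed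
    have "C * \<epsilon> powr (- \<delta> / 2) * sqrt (real N) \<le> C * \<epsilon> powr (- \<delta> / 2) * \<epsilon> powr (- 1 / 2)"
      using sN C0 by (intro mult_left_mono) auto
    also have "\<dots> = C * \<epsilon> powr (- (1 + \<delta>) / 2)"
    proof -
      have ex: "- (1 + \<delta>) / 2 = - \<delta> / 2 + - 1 / 2" by (simp add: field_simps)
      show ?thesis unfolding ex powr_add by (simp add: mult.assoc)
    qed
    finally show "expectation (\<lambda>\<omega>. Linf01 (rand_f \<gamma> \<epsilon> c \<omega>) powr p) powr (1 / p)
          \<le> C * \<epsilon> powr (- (1 + \<delta>) / 2)" using MB by linarith
  qed
qed
end
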